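(* Assume $\varepsilon\max_i\delta_i<1$. Suppose that either (i) $\mathcal G$ is structurally balanced (i.e. $\lambda_1(\mathcal L)=0$), or (ii) $\mathcal G$ is structurally unbalanced and $\lambda_1(\mathcal L)<2-\lambda_n(\mathcal L)$. Then $\pi_1<\pi_{1,d}$.
   Context: Let $\mathcal G$ be an undirected, connected signed graph on $n$ nodes without self-loops, with symmetric adjacency matrix $A=[a_{ij}]$ having zero diagonal and entries of either sign. Let $\delta_i=\sum_j|a_{ij}|>0$, $\Delta=\mathrm{diag}(\delta_i)$, and let $\mathcal L=I-\Delta^{-1}A$ be the normalized signed Laplacian, with real eigenvalues $\lambda_1(\mathcal L)\le\dots\le\lambda_n(\mathcal L)$. Structural balance means there is a signature matrix $S$ (diagonal with $\pm1$ entries) such that $SAS\ge0$ entrywise. Let $\varepsilon>0$ be a step size and, for $\pi>0$, let $L_\pi=\Delta-\pi A$ and $J_\pi=I-\varepsilon L_\pi$, both symmetric. Define $\pi_1=\frac{1}{1-\lambda_1(\mathcal L)}$; this is the value of $\pi$ at which $\lambda_1(L_\pi)=0$, equivalently $\lambda_n(J_\pi)=1$. Define $\pi_{1,d}$ as the smallest $\pi>0$ at which $\lambda_n(L_\pi)=2/\varepsilon$, equivalently $\lambda_1(J_\pi)=-1$. *)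

theory Defs
  imports "HOL-Analysis.Analysis"
begin

text \<open>Signed graph on the node type 'n (finite, n = CARD('n)), given by its
real adjacency matrix A.\<close>

definition deg :: "real^'n^'n \<Rightarrow> 'n::finite \<Rightarrow> real" where
  "deg A i = (\<Sum>j\<in>UNIV. \<bar>A$i$j\<bar>)"

definition Delta :: "real^'n^'n \<Rightarrow> real^'n^'n::finite" where
  "Delta A = (\<chi> i j. if i = j then deg A i else 0)"

definition normLap :: "real^'n^'n \<Rightarrow> real^'n^'n::finite" where
  "normLap A = mat 1 - matrix_inv (Delta A) ** A"

definition Lpi :: "real^'n^'n \<Rightarrow> real \<Rightarrow> real^'n^'n::finite" where
  "Lpi A p = Delta A - p *\<^sub>R A"

definition real_eigenvalues :: "real^'n^'n \<Rightarrow> real set" where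
  "real_eigenvalues M = {l. \<exists>v::real^'n. v \<noteq> 0 \<and> M *v v = l *\<^sub>R v}"

definition lam_min :: "real^'n^'n \<Rightarrow> real" where
  "lam_min M = Min (real_eigenvalues M)"

definition lam_max :: "real^'n^'n \<Rightarrow> real" where
  "lam_max M = Max (real_eigenvalues M)"

definition connected_signed :: "real^'n^'n \<Rightarrow> bool" where
  "connected_signed A \<longleftrightarrow> (\<forall>i j. (\<lambda>x y. A$x$y \<noteq> 0)\<^sup>*\<^sup>* i j)"

definition structurally_balanced :: "real^'n^'n \<Rightarrow> bool" where
  "structurally_balanced A \<longleftrightarrow>
     (\<exists>S::real^'n^'n. (\<forall>i j. i \<noteq> j \<longrightarrow> S$i$j = 0) \<and> (\<forall>i. S$i$i = 1 \<or> S$i$i = -1)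
        \<and> (\<forall>i j. (S ** A ** S)$i$j \<ge> 0))"

definition pi1 :: "real^'n^'n \<Rightarrow> real" where
  "pi1 A = 1 / (1 - lam_min (normLap A))"

definition pi1d :: "real \<Rightarrow> real^'n^'n \<Rightarrow> real" where
  "pi1d eps A = (LEAST p::real. 0 < p \<and> lam_max (Lpi A p) = 2 / eps)"

end

theory Submission
  imports Defs
begin


definition Q :: "real^'n^'n \<Rightarrow> real^'n \<Rightarrow> real" where
  "Q M v = v \<bullet> (M *v v)"

lemma sym_inner:
  fixes M :: "real^'n^'n::finite"
  assumes "transpose M = M"
  shows "x \<bullet> (M *v y) = y \<bullet> (M *v x)"
proof -
  have "x \<bullet> (M *v y) = (x v* M) \<bullet> y" by (simp add: dot_lmul_matrix)
  also have "x v* M = transpose M *v x" by simp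
  also have "\<dots> = M *v x" using assms by simp
  finally show ?thesis by (simp add: inner_commute)
qed

lemma Q_scale: "Q M (c *\<^sub>R v) = c^2 * Q M v"
  by (simp add: Q_def matrix_vector_mult_scaleR power2_eq_square)

lemma Q_add:
  fixes M :: "real^'n^'n::finite"
  assumes "transpose M = M"
  shows "Q M (v + t *\<^sub>R w) = Q M v + 2 * t * (w \<bullet> (M *v v)) + t^2 * Q M w"
proof -
  have "Q M (v + t *\<^sub>R w) = v \<bullet> (M *v v) + t * (v \<bullet> (M *v w)) + t * (w \<bullet> (M *v v)) + t*t * (w \<bullet> (M *v w))"
    by (simp add: Q_def matrix_vector_right_distrib matrix_vector_mult_scaleR inner_add_left inner_add_right algebra_simps)
  then show ?thesis using sym_inner[OF assms, of v w] by (simp add: Q_def power2_eq_square algebra_simps)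
qed

lemma quad_le_zero:
  fixes a b :: real
  assumes "\<And>t. a * t + b * t^2 \<le> 0"
  shows "a = 0"
proof (rule ccontr)
  assume "a \<noteq> 0"
  define s where "s = 1 / (\<bar>b\<bar> + 1)"
  have sp: "s > 0" unfolding s_def by (simp add: add_pos_nonneg)
  have "1 + b * s > 0"
  proof -
    have "\<bar>b\<bar> * s < 1" unfolding s_def by (simp add: divide_simps)
    moreover have "- (b * s) \<le> \<bar>b\<bar> * s" using mult_right_mono[OF abs_ge_minus_self[of b] less_imp_le[OF sp]] by simp
    ultimately show ?thesis by linarith
  qed
  then have "a^2 * s * (1 + b * s) > 0" using \<open>a\<noteq>0\<close> sp by simp
  moreover have "a * (a * s) + b * (a * s)^2 = a^2 * s * (1 + b * s)" by (simp add: power2_eq_square algebra_simps)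
  ultimately show False using assms[of "a * s"] by linarith
qed

lemma eig_finite:
  fixes M :: "real^'n^'n::finite"
  assumes sym: "transpose M = M"
  shows "finite (real_eigenvalues M)"
proof -
  define E where "E = real_eigenvalues M"
  define f where "f l = (SOME v. v \<noteq> 0 \<and> M *v v = l *\<^sub>R v)" for l
  have f: "f l \<noteq> 0 \<and> M *v f l = l *\<^sub>R f l" if "l \<in> E" for l
    using that unfolding E_def real_eigenvalues_def f_def by (metis (mono_tags, lifting) mem_Collect_eq someI_ex)
  have inj: "inj_on f E"
  proof (rule inj_onI)
    fix x y assume "x \<in> E" "y \<in> E" "f x = f y"
    then have "x *\<^sub>R f x = y *\<^sub>R f x" using f by metis
    then show "x = y" using f \<open>x\<in>E\<close> by (metis scaleR_cancel_right)
  qed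
  have po: "pairwise orthogonal (f ` E)"
  proof (clarsimp simp: pairwise_def orthogonal_def)
    fix x y assume xy: "x \<in> E" "y \<in> E" "f x \<noteq> f y"
    then have "x \<noteq> y" by auto
    have "f y \<bullet> (M *v f x) = f x \<bullet> (M *v f y)" by (rule sym_inner[OF sym])
    then have "x * (f y \<bullet> f x) = y * (f x \<bullet> f y)" using f xy by simp
    then have "(x - y) * (f x \<bullet> f y) = 0" by (simp add: inner_commute algebra_simps)
    then show "f x \<bullet> f y = 0" using \<open>x\<noteq>y\<close> by simp
  qed
  have "0 \<notin> f ` E" using f by auto
  then have "independent (f ` E)" using pairwise_orthogonal_independent po by blast
  then have "finite (f ` E)" by (rule finiteI_independent)
  then show ?thesis using inj finite_image_iff unfolding E_def by blast
qed

lemma spec_max: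
  fixes M :: "real^'n^'n::finite"
  assumes sym: "transpose M = M"
  shows "finite (real_eigenvalues M) \<and> lam_max M \<in> real_eigenvalues M \<and>
         (\<forall>l\<in>real_eigenvalues M. l \<le> lam_max M) \<and>
         (\<forall>u. Q M u \<le> lam_max M * (u \<bullet> u)) \<and> (\<exists>v. v \<noteq> 0 \<and> Q M v = lam_max M * (v \<bullet> v))"
proof -
  have cont: "continuous_on (sphere 0 1) (Q M)"
    unfolding Q_def by (intro continuous_intros)
  obtain v where v: "v \<in> sphere (0::real^'n) 1" and vmax: "\<And>u. u \<in> sphere 0 1 \<Longrightarrow> Q M u \<le> Q M v"
    proof -
    have ne: "sphere (0::real^'n) 1 \<noteq> {}" by (simp add: sphere_eq_empty)
    show ?thesis using continuous_attains_sup[OF compact_sphere ne cont] that by blast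
  qed
  define lam where "lam = Q M v"
  have vv: "v \<bullet> v = 1" using v by (simp add: dot_square_norm)
  have bound: "Q M x \<le> lam * (x \<bullet> x)" for x
  proof (cases "x = 0")
    case True then show ?thesis by (simp add: Q_def)
  next
    case False
    define u where "u = (1 / norm x) *\<^sub>R x"
    have "u \<in> sphere 0 1" using False by (simp add: u_def)
    then have "Q M u \<le> lam" using vmax lam_def by blast
    have "Q M x = (norm x)^2 * Q M u"
      using False by (simp add: u_def Q_scale power_divide)
    also have "\<dots> \<le> (norm x)^2 * lam" using \<open>Q M u \<le> lam\<close> by (simp add: mult_left_mono)
    also have "(norm x)^2 = x \<bullet> x" by (simp add: dot_square_norm)
    finally show ?thesis by (simp add: mult.commute)
  qed
  have orth: "w \<bullet> (M *v v - lam *\<^sub>R v) = 0" for w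
  proof -
    have "2 * (w \<bullet> (M *v v) - lam * (w \<bullet> v)) * t + (Q M w - lam * (w \<bullet> w)) * t^2 \<le> 0" for t
    proof -
      have "Q M (v + t *\<^sub>R w) \<le> lam * ((v + t *\<^sub>R w) \<bullet> (v + t *\<^sub>R w))" by (rule bound)
      moreover have "(v + t *\<^sub>R w) \<bullet> (v + t *\<^sub>R w) = 1 + 2 * t * (w \<bullet> v) + t^2 * (w \<bullet> w)"
        using vv by (simp add: inner_add_left inner_add_right inner_commute power2_eq_square algebra_simps)
      moreover have "Q M (v + t *\<^sub>R w) = lam + 2 * t * (w \<bullet> (M *v v)) + t^2 * Q M w"
        using Q_add[OF sym, of v t w] lam_def by simp
      ultimately have "lam + 2 * t * (w \<bullet> (M *v v)) + t^2 * Q M w \<le> lam * (1 + 2 * t * (w \<bullet> v) + t^2 * (w \<bullet> w))"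
        by simp
      then show ?thesis by (simp add: algebra_simps)

    qed
    then have "2 * (w \<bullet> (M *v v) - lam * (w \<bullet> v)) = 0" by (rule quad_le_zero)
    then show ?thesis by (simp add: inner_diff_right)
  qed
  have eig: "M *v v = lam *\<^sub>R v" using orth[of "M *v v - lam *\<^sub>R v"] by simp
  have v0: "v \<noteq> 0" using vv by auto
  have mem: "lam \<in> real_eigenvalues M" using eig v0 unfolding real_eigenvalues_def by blast
  have le: "l \<le> lam" if "l \<in> real_eigenvalues M" for l
  proof -
    have "\<exists>u. u \<noteq> 0 \<and> M *v u = l *\<^sub>R u" using that by (simp add: real_eigenvalues_def)
    then obtain u where u: "u \<noteq> 0" "M *v u = l *\<^sub>R u" by blast
    have "Q M u = l * (u \<bullet> u)" using u by (simp add: Q_def)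
    moreover have "u \<bullet> u > 0" using u by simp
    ultimately show ?thesis using bound[of u] by simp
  qed
  have fin: "finite (real_eigenvalues M)" by (rule eig_finite[OF sym])
  have lm: "lam_max M = lam" unfolding lam_max_def using fin mem le by (intro Max_eqI) auto
  show ?thesis using fin mem le bound v0 vv lm lam_def by auto
qed



lemma inner_vec_sum: "(x::real^'n::finite) \<bullet> y = (\<Sum>i\<in>UNIV. x$i * y$i)"
  by (simp add: inner_vec_def)

lemma Delta_mult: "(Delta A *v v)$i = deg A i * v$i"
  by (simp add: Delta_def matrix_vector_mult_def if_distrib[of "\<lambda>x. x * _"] cong: if_cong)

lemma symA: "transpose A = A \<Longrightarrow> A$j$i = A$i$j"
proof -
  have "A$j$i = transpose A $ i $ j" by (simp add: transpose_def)
  then show "transpose A = A \<Longrightarrow> A$j$i = A$i$j" by simp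
qed

lemma scaleR_mv: "(p *\<^sub>R A) *v (v::real^'n::finite) = p *\<^sub>R (A *v v)"
  by (simp add: vec_eq_iff matrix_vector_mult_def sum_distrib_left algebra_simps)

lemma QD: "Q (Delta A) v = (\<Sum>i\<in>UNIV. deg A i * (v$i)^2)"
  by (simp add: Q_def inner_vec_sum Delta_mult power2_eq_square algebra_simps)

lemma QA: "Q A v = (\<Sum>i\<in>UNIV. \<Sum>j\<in>UNIV. v$i * A$i$j * v$j)"
  by (simp add: Q_def inner_vec_sum matrix_vector_mult_def sum_distrib_left algebra_simps)

lemma QL: "Q (Lpi A p) v = Q (Delta A) v - p * Q A v"
  by (simp add: Q_def Lpi_def matrix_vector_mult_diff_rdistrib inner_diff_right scaleR_mv)

lemma Delta_sym: "transpose (Delta A) = Delta A"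
  by (simp add: Delta_def transpose_def vec_eq_iff)

lemma transpose_diff': "transpose (X - Y) = transpose X - transpose (Y::real^'n^'m)"
  by (simp add: transpose_def vec_eq_iff)

lemma transpose_scaleR': "transpose (c *\<^sub>R X) = c *\<^sub>R transpose (X::real^'n^'m)"
  by (simp add: transpose_def vec_eq_iff)

lemma Lpi_sym: "transpose A = A \<Longrightarrow> transpose (Lpi A p) = Lpi A p"
  by (simp add: Lpi_def transpose_diff' transpose_scaleR' Delta_sym)



lemma pos_nz: "\<forall>i. deg A i > 0 \<Longrightarrow> deg A i \<noteq> 0"
  by (metis less_irrefl)

definition Dinv :: "real^'n^'n \<Rightarrow> real^'n^'n::finite" where
  "Dinv A = (\<chi> i j. if i = j then 1 / deg A i else 0)"

lemma Dinv_mult: "(Dinv A *v v)$i = v$i / deg A i"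
  by (simp add: Dinv_def matrix_vector_mult_def if_distrib[of "\<lambda>x. x * _"] cong: if_cong)

lemma Delta_Dinv:
  assumes "\<forall>i. deg A i > 0"
  shows "Delta A ** Dinv A = mat 1" "Dinv A ** Delta A = mat 1"
proof -
  have "(Delta A ** Dinv A) $ i $ j = mat 1 $ i $ j" for i j
  proof -
    show ?thesis using pos_nz[OF assms]
      by (simp add: matrix_matrix_mult_def Delta_def Dinv_def mat_def if_distrib[of "\<lambda>x. x * _"] cong: if_cong)
  qed
  then show "Delta A ** Dinv A = mat 1" by (simp add: vec_eq_iff)
  have "(Dinv A ** Delta A) $ i $ j = mat 1 $ i $ j" for i j
  proof -
    show ?thesis using pos_nz[OF assms]
      by (simp add: matrix_matrix_mult_def Delta_def Dinv_def mat_def if_distrib[of "\<lambda>x. x * _"] cong: if_cong)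
  qed
  then show "Dinv A ** Delta A = mat 1" by (simp add: vec_eq_iff)
qed

lemma matrix_inv_Delta:
  assumes "\<forall>i. deg A i > 0"
  shows "matrix_inv (Delta A) = Dinv A"
proof -
  define X where "X = matrix_inv (Delta A)"
  have "\<exists>A'. Delta A ** A' = mat 1 \<and> A' ** Delta A = mat 1" using Delta_Dinv[OF assms] by blast
  then have X: "Delta A ** X = mat 1 \<and> X ** Delta A = mat 1"
    unfolding X_def matrix_inv_def by (rule someI_ex)
  have "X = X ** (Delta A ** Dinv A)" using Delta_Dinv[OF assms] by simp
  also have "\<dots> = (X ** Delta A) ** Dinv A" by (simp add: matrix_mul_assoc)
  also have "\<dots> = Dinv A" using X by simp
  finally show ?thesis unfolding X_def .
qed

lemma normLap_mult:
  assumes "\<forall>i. deg A i > 0"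
  shows "(normLap A *v v)$i = v$i - (A *v v)$i / deg A i"
  unfolding normLap_def matrix_inv_Delta[OF assms]
  by (simp add: matrix_vector_mult_diff_rdistrib matrix_vector_mul_assoc[symmetric] Dinv_mult)

definition Bm :: "real^'n^'n \<Rightarrow> real^'n^'n::finite" where
  "Bm A = (\<chi> i j. A$i$j / (sqrt (deg A i) * sqrt (deg A j)))"

definition sc :: "real^'n^'n \<Rightarrow> real^'n \<Rightarrow> real^'n::finite" where
  "sc A v = (\<chi> j. sqrt (deg A j) * v$j)"

lemma Bm_sym:
  assumes "transpose A = A" shows "transpose (Bm A) = Bm A"
proof -
  have "Bm A $ j $ i = Bm A $ i $ j" for i j
    using symA[OF assms, of j i] by (simp add: Bm_def mult.commute)
  then show ?thesis by (simp add: transpose_def vec_eq_iff)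
qed

lemma Bm_mult:
  assumes "\<forall>i. deg A i > 0"
  shows "(Bm A *v sc A v)$i = (A *v v)$i / sqrt (deg A i)"
proof -
  have "(Bm A *v sc A v)$i = (\<Sum>j\<in>UNIV. A$i$j / (sqrt (deg A i) * sqrt (deg A j)) * (sqrt (deg A j) * v$j))"
    by (simp add: Bm_def sc_def matrix_vector_mult_def)
  also have "\<dots> = (\<Sum>j\<in>UNIV. A$i$j * v$j / sqrt (deg A i))"
    by (rule sum.cong) (auto simp: pos_nz[OF assms])
  also have "\<dots> = (A *v v)$i / sqrt (deg A i)" by (simp add: matrix_vector_mult_def sum_divide_distrib)
  finally show ?thesis .
qed

lemma sc_inv:
  assumes "\<forall>i. deg A i > 0"
  shows "sc A (\<chi> j. w$j / sqrt (deg A j)) = w"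
  using pos_nz[OF assms] by (simp add: sc_def vec_eq_iff)

lemma sc_zero:
  assumes "\<forall>i. deg A i > 0"
  shows "sc A v = 0 \<longleftrightarrow> v = 0"
  using pos_nz[OF assms] by (auto simp: sc_def vec_eq_iff)

lemma cancel_helper: "s \<noteq> 0 \<Longrightarrow> (c * (s * s) * x) / s = c * (s * (x::real))"
  by (simp add: field_simps)

lemma mult_helper: "c * (s * x) * s = c * (s * s) * (x::real)"
  by (simp add: algebra_simps)

lemma normLap_eig:
  assumes pos: "\<forall>i. deg A i > 0"
  shows "l \<in> real_eigenvalues (normLap A) \<longleftrightarrow> 1 - l \<in> real_eigenvalues (Bm A)"
proof
  assume "l \<in> real_eigenvalues (normLap A)"
  then obtain v where v: "v \<noteq> 0" "normLap A *v v = l *\<^sub>R v" unfolding real_eigenvalues_def by blast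
  have "(Bm A *v sc A v)$i = (1 - l) * (sc A v)$i" for i
  proof -
    have "v$i - (A *v v)$i / deg A i = l * v$i" 
    proof -
      have "(normLap A *v v)$i = l * v$i" using v(2) by simp
      then show ?thesis using normLap_mult[OF pos, of v i] by simp
    qed
    then have "(A *v v)$i = (1 - l) * deg A i * v$i" using pos_nz[OF pos] by (simp add: field_simps)
    moreover have dd: "deg A i = sqrt (deg A i) * sqrt (deg A i)" using pos by (simp add: less_imp_le)
    moreover have "sqrt (deg A i) \<noteq> 0" using pos_nz[OF pos] by simp
    ultimately have "(A *v v)$i / sqrt (deg A i) = (1 - l) * (sqrt (deg A i) * v$i)"
      using cancel_helper[of "sqrt (deg A i)" "1 - l" "v$i"] by metis
    then show ?thesis using Bm_mult[OF pos] by (simp add: sc_def)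
  qed
  then have "Bm A *v sc A v = (1 - l) *\<^sub>R sc A v" by (simp add: vec_eq_iff)
  moreover have "sc A v \<noteq> 0" using sc_zero[OF pos] v by blast
  ultimately show "1 - l \<in> real_eigenvalues (Bm A)" unfolding real_eigenvalues_def by blast
next
  assume "1 - l \<in> real_eigenvalues (Bm A)"
  then obtain w where w: "w \<noteq> 0" "Bm A *v w = (1 - l) *\<^sub>R w" unfolding real_eigenvalues_def by blast
  define v where "v = (\<chi> j. w$j / sqrt (deg A j))"
  have wv: "sc A v = w" unfolding v_def by (rule sc_inv[OF pos])
  have "(normLap A *v v)$i = l * v$i" for i
  proof -
    have "(A *v v)$i / sqrt (deg A i) = (1 - l) * w$i" using w(2) Bm_mult[OF pos, of v i] wv by simp
    then have "(A *v v)$i = (1 - l) * w$i * sqrt (deg A i)" using pos_nz[OF pos] by (simp add: field_simps)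
    also have "w$i = sqrt (deg A i) * v$i" using wv by (simp add: sc_def vec_eq_iff)
    finally have "(A *v v)$i = (1 - l) * (sqrt (deg A i) * v$i) * sqrt (deg A i)" .
    moreover have dd: "sqrt (deg A i) * sqrt (deg A i) = deg A i" using pos by (simp add: less_imp_le)
    ultimately have "(A *v v)$i = (1 - l) * deg A i * v$i"
      using mult_helper[of "1 - l" "sqrt (deg A i)" "v$i"] by metis
    then have "(A *v v)$i / deg A i = (1 - l) * v$i" using pos_nz[OF pos] by (simp add: field_simps)
    then show ?thesis using normLap_mult[OF pos, of v i] by (simp add: algebra_simps)
  qed
  then have "normLap A *v v = l *\<^sub>R v" by (simp add: vec_eq_iff)
  moreover have "v \<noteq> 0" using w wv sc_zero[OF pos] by blast
  ultimately show "l \<in> real_eigenvalues (normLap A)" unfolding real_eigenvalues_def by blast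
qed

lemma QB:
  assumes "\<forall>i. deg A i > 0"
  shows "Q (Bm A) (sc A v) = Q A v" "sc A v \<bullet> sc A v = Q (Delta A) v"
proof -
  have "Q (Bm A) (sc A v) = (\<Sum>i\<in>UNIV. v$i * (A *v v)$i)"
    unfolding Q_def inner_vec_sum Bm_mult[OF assms] using pos_nz[OF assms]
    by (intro sum.cong) (auto simp: sc_def)
  then show "Q (Bm A) (sc A v) = Q A v" by (simp add: Q_def inner_vec_sum)
  show "sc A v \<bullet> sc A v = Q (Delta A) v" unfolding QD inner_vec_sum sc_def using assms
    by (intro sum.cong) (auto simp: power2_eq_square less_imp_le algebra_simps)
qed

lemma two_abs: "2 * \<bar>x * y\<bar> \<le> x^2 + (y::real)^2"
proof -
  have "0 \<le> (\<bar>x\<bar> - \<bar>y\<bar>)^2" by simp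
  then show ?thesis by (simp add: power2_eq_square abs_mult algebra_simps)
qed

lemma QA_bound:
  assumes sym: "transpose A = A"
  shows "\<bar>Q A v\<bar> \<le> Q (Delta A) v"
proof -
  have "\<bar>Q A v\<bar> \<le> (\<Sum>i\<in>UNIV. \<Sum>j\<in>UNIV. \<bar>v$i * A$i$j * v$j\<bar>)"
    unfolding QA by (rule order_trans[OF sum_abs]) (intro sum_mono sum_abs)
  also have "\<dots> \<le> (\<Sum>i\<in>UNIV. \<Sum>j\<in>UNIV. (\<bar>A$i$j\<bar> * (v$i)^2 + \<bar>A$i$j\<bar> * (v$j)^2) / 2)"
  proof (intro sum_mono)
    fix i j
    have "2 * \<bar>v$i * v$j\<bar> \<le> (v$i)^2 + (v$j)^2" by (rule two_abs)
    then have "\<bar>A$i$j\<bar> * (2 * \<bar>v$i * v$j\<bar>) \<le> \<bar>A$i$j\<bar> * ((v$i)^2 + (v$j)^2)" by (simp add: mult_left_mono)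
    then show "\<bar>v$i * A$i$j * v$j\<bar> \<le> (\<bar>A$i$j\<bar> * (v$i)^2 + \<bar>A$i$j\<bar> * (v$j)^2) / 2"
      by (simp add: abs_mult algebra_simps)
  qed
  also have "\<dots> = ((\<Sum>i\<in>UNIV. \<Sum>j\<in>UNIV. \<bar>A$i$j\<bar> * (v$i)^2) + (\<Sum>i\<in>UNIV. \<Sum>j\<in>UNIV. \<bar>A$i$j\<bar> * (v$j)^2)) / 2"
    by (simp add: sum.distrib sum_divide_distrib[symmetric] add_divide_distrib)
  also have "(\<Sum>i\<in>UNIV. \<Sum>j\<in>UNIV. \<bar>A$i$j\<bar> * (v$i)^2) = Q (Delta A) v"
    by (simp add: QD deg_def sum_distrib_right)
  also have "(\<Sum>i\<in>UNIV. \<Sum>j\<in>UNIV. \<bar>A$i$j\<bar> * (v$j)^2) = (\<Sum>j\<in>UNIV. \<Sum>i\<in>UNIV. \<bar>A$j$i\<bar> * (v$j)^2)"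
    by (subst sum.swap) (simp add: symA[OF sym])
  also have "\<dots> = Q (Delta A) v"
    by (simp add: QD deg_def sum_distrib_right)
  finally show ?thesis by simp
qed



lemma spec_min:
  fixes M :: "real^'n^'n::finite"
  assumes sym: "transpose M = M"
  shows "finite (real_eigenvalues M) \<and> lam_min M \<in> real_eigenvalues M \<and>
         (\<forall>l\<in>real_eigenvalues M. lam_min M \<le> l) \<and>
         (\<forall>u. lam_min M * (u \<bullet> u) \<le> Q M u) \<and> (\<exists>v. v \<noteq> 0 \<and> Q M v = lam_min M * (v \<bullet> v))"
proof -
  have "transpose (-M) = - transpose M" by (simp add: transpose_def vec_eq_iff)
  then have symm: "transpose (-M) = -M" using sym by simp
  have E: "real_eigenvalues (-M) = uminus ` real_eigenvalues M"
  proof -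
    have "l \<in> real_eigenvalues (-M) \<longleftrightarrow> -l \<in> real_eigenvalues M" for l
    proof -
      have neg: "(-M) *v v = - (M *v v)" for v
        by (simp add: matrix_vector_mult_def vec_eq_iff sum_negf)
      have "(-M) *v v = l *\<^sub>R v \<longleftrightarrow> M *v v = (-l) *\<^sub>R v" for v
        unfolding neg scaleR_minus_left by (metis minus_minus)
      then show ?thesis unfolding real_eigenvalues_def mem_Collect_eq by presburger
    qed
    note * = this
    show ?thesis
    proof (rule set_eqI)
      fix l
      show "l \<in> real_eigenvalues (-M) \<longleftrightarrow> l \<in> uminus ` real_eigenvalues M"
      proof
        assume "l \<in> real_eigenvalues (-M)"
        then have "-l \<in> real_eigenvalues M" using * by simp
        then show "l \<in> uminus ` real_eigenvalues M" using image_eqI[of l uminus "-l"] by simp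
      next
        assume "l \<in> uminus ` real_eigenvalues M"
        then obtain x where "x \<in> real_eigenvalues M" "l = -x" by blast
        then show "l \<in> real_eigenvalues (-M)" using * by simp
      qed
    qed
  qed
  have QN: "Q (-M) u = - Q M u" for u
    by (simp add: Q_def matrix_vector_mult_def inner_vec_sum sum_negf[symmetric] sum_distrib_left)
  define m where "m = lam_max (-M)"
  have sm: "finite (real_eigenvalues (-M))" "m \<in> real_eigenvalues (-M)"
    "\<forall>l\<in>real_eigenvalues (-M). l \<le> m" "\<forall>u. Q (-M) u \<le> m * (u \<bullet> u)"
    "\<exists>v. v \<noteq> 0 \<and> Q (-M) v = m * (v \<bullet> v)"
    using spec_max[OF symm] unfolding m_def by auto
  have fin: "finite (real_eigenvalues M)" by (rule eig_finite[OF sym])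
  have mem: "-m \<in> real_eigenvalues M" using sm(2) E by auto
  have le: "-m \<le> l" if "l \<in> real_eigenvalues M" for l
  proof -
    have "-l \<in> real_eigenvalues (-M)" unfolding E using that by simp
    then have "-l \<le> m" using sm(3) by blast
    then show ?thesis by simp
  qed
  have lm: "lam_min M = -m" unfolding lam_min_def using fin mem le by (intro Min_eqI) auto
  have b1: "lam_min M * (u \<bullet> u) \<le> Q M u" for u
    using sm(4) QN[of u] lm by (metis minus_le_iff mult_minus_left)
  obtain v where v: "v \<noteq> 0" "Q (-M) v = m * (v \<bullet> v)" using sm(5) by blast
  have "Q M v = lam_min M * (v \<bullet> v)" using v(2) QN[of v] lm by simp
  then show ?thesis using fin mem le lm b1 v(1) by auto
qed



lemma QD_nonneg: "\<forall>i. deg A i > 0 \<Longrightarrow> Q (Delta A) v \<ge> 0"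
  unfolding QD by (intro sum_nonneg) (simp add: less_imp_le)

lemma QD_pos:
  assumes "\<forall>i. deg A i > 0" "v \<noteq> 0"
  shows "Q (Delta A) v > 0"
proof -
  obtain k where k: "v$k \<noteq> 0" using assms(2) by (auto simp: vec_eq_iff)
  have "deg A k * (v$k)^2 > 0" using k assms(1) by simp
  also have "deg A k * (v$k)^2 \<le> (\<Sum>i\<in>UNIV. deg A i * (v$i)^2)"
    by (rule member_le_sum) (use assms(1) in \<open>auto simp: less_imp_le\<close>)
  finally show ?thesis unfolding QD .
qed

lemma QD_upper:
  fixes A :: "real^'n^'n::finite"
  assumes pos: "\<forall>i. deg A i > 0" and eps: "eps > 0" and step: "eps * Max (range (deg A)) < 1"
    and v: "v \<noteq> 0"
  shows "eps * Q (Delta A) v < v \<bullet> v"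
proof -
  have dle: "deg A i \<le> Max (range (deg A))" for i by (rule Max_ge) auto
  have e1: "eps * deg A i < 1" for i
    using mult_left_mono[OF dle[of i], of eps] eps step by linarith
  obtain k where k: "v$k \<noteq> 0" using v by (auto simp: vec_eq_iff)
  have "(\<Sum>i\<in>UNIV. eps * deg A i * (v$i)^2) < (\<Sum>i\<in>UNIV. (v$i)^2)"
  proof (rule sum_strict_mono_ex1)
    show "\<forall>i\<in>UNIV. eps * deg A i * (v$i)^2 \<le> (v$i)^2"
    proof
      fix i :: 'n
      have "eps * deg A i \<le> 1" using e1[of i] by simp
      from mult_right_mono[OF this, of "(v$i)^2"] show "eps * deg A i * (v$i)^2 \<le> (v$i)^2" by simp
    qed
    show "\<exists>i\<in>UNIV. eps * deg A i * (v$i)^2 < (v$i)^2"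
      using e1[of k] k by (auto intro!: exI[of _ k])
  qed auto
  then show ?thesis by (simp add: QD inner_vec_sum sum_distrib_left power2_eq_square mult.assoc)
qed

lemma QD_le:
  fixes A :: "real^'n^'n::finite"
  assumes pos: "\<forall>i. deg A i > 0"
  shows "Q (Delta A) v \<le> Max (range (deg A)) * (v \<bullet> v)"
proof -
  have dle: "deg A i \<le> Max (range (deg A))" for i by (rule Max_ge) auto
  have "(\<Sum>i\<in>UNIV. deg A i * (v$i)^2) \<le> (\<Sum>i\<in>UNIV. Max (range (deg A)) * (v$i)^2)"
    by (intro sum_mono mult_right_mono dle) simp
  then show ?thesis by (simp add: QD inner_vec_sum sum_distrib_left power2_eq_square)
qed

lemma diag_mult:
  fixes S M :: "real^'n^'n::finite"
  assumes "\<forall>i j. i \<noteq> j \<longrightarrow> S$i$j = 0"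
  shows "(S ** M)$i$j = S$i$i * M$i$j" "(M ** S)$i$j = M$i$j * S$j$j"
proof -
  have "(S ** M)$i$j = (\<Sum>k\<in>UNIV. S$i$k * M$k$j)" by (simp add: matrix_matrix_mult_def)
  also have "\<dots> = (\<Sum>k\<in>UNIV. if k = i then S$i$i * M$i$j else 0)"
    by (rule sum.cong) (use assms in auto)
  finally show "(S ** M)$i$j = S$i$i * M$i$j" by simp
  have "(M ** S)$i$j = (\<Sum>k\<in>UNIV. M$i$k * S$k$j)" by (simp add: matrix_matrix_mult_def)
  also have "\<dots> = (\<Sum>k\<in>UNIV. if k = j then M$i$j * S$j$j else 0)"
    by (rule sum.cong) (use assms in auto)
  finally show "(M ** S)$i$j = M$i$j * S$j$j" by simp
qed

lemma balanced_vec: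
  fixes A :: "real^'n^'n::finite"
  assumes "structurally_balanced A"
  shows "\<exists>v. v \<noteq> 0 \<and> Q A v = Q (Delta A) v"
proof -
  from assms[unfolded structurally_balanced_def] obtain S :: "real^'n^'n" where
    S0: "(\<forall>i j. i \<noteq> j \<longrightarrow> S$i$j = 0) \<and> (\<forall>i. S$i$i = 1 \<or> S$i$i = -1)
    \<and> (\<forall>i j. (S ** A ** S)$i$j \<ge> 0)" ..
  from S0 have S: "\<forall>i j. i \<noteq> j \<longrightarrow> S$i$j = 0" "\<forall>i. S$i$i = 1 \<or> S$i$i = -1"
    "\<forall>i j. (S ** A ** S)$i$j \<ge> 0" by auto
  define v where "v = (\<chi> i. S$i$i)"
  have ent: "v$i * A$i$j * v$j = \<bar>A$i$j\<bar>" for i j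
  proof -
    have e: "(S ** A ** S)$i$j = v$i * A$i$j * v$j"
      unfolding v_def using diag_mult[OF S(1)] by simp
    have a1: "\<bar>v$k\<bar> = 1" for k using S(2)[rule_format, of k] unfolding v_def by auto
    have "\<bar>v$i * A$i$j * v$j\<bar> = \<bar>A$i$j\<bar>" unfolding abs_mult a1 by simp
    then show ?thesis using S(3) e by (metis abs_of_nonneg)
  qed
  have sq: "(v$i)^2 = 1" for i using S(2)[rule_format, of i] unfolding v_def by auto
  have "Q A v = (\<Sum>i\<in>UNIV. \<Sum>j\<in>UNIV. \<bar>A$i$j\<bar>)" unfolding QA ent ..
  also have "\<dots> = Q (Delta A) v" unfolding QD sq deg_def by simp
  finally have "Q A v = Q (Delta A) v" .
  moreover have "v \<noteq> 0" using sq by (metis power2_eq_square zero_index mult_zero_left zero_neq_one)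
  ultimately show ?thesis by blast
qed

lemma neg_vec:
  fixes A :: "real^'n^'n::finite"
  assumes sym: "transpose A = A" and zd: "\<forall>i. A$i$i = 0" and pos: "\<forall>i. deg A i > 0"
  shows "\<exists>v. Q A v < 0"
proof -
  obtain i :: 'n where True by blast
  have "deg A i > 0" using pos by blast
  then obtain j where j: "A$i$j \<noteq> 0" unfolding deg_def
    by (metis (no_types, lifting) abs_zero sum.neutral less_irrefl)
  have ij: "i \<noteq> j" using j zd by auto
  define s where "s = sgn (A$i$j)"
  define v :: "real^'n" where "v = axis i 1 - s *\<^sub>R axis j 1"
  have col: "(A *v axis k 1)$m = A$m$k" for k m
    by (simp add: matrix_vector_mult_def axis_def if_distrib[of "\<lambda>x. _ * x"] cong: if_cong)
  have Av: "A *v v = A *v axis i 1 - s *\<^sub>R (A *v axis j 1)"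
    unfolding v_def by (simp add: matrix_vector_mult_diff_distrib matrix_vector_mult_scaleR)
  have "Q A v = (A *v v)$i - s * (A *v v)$j"
    unfolding Q_def v_def by (simp add: inner_diff_left inner_axis')
  also have "\<dots> = (A$i$i - s * A$i$j) - s * (A$j$i - s * A$j$j)"
    unfolding Av by (simp add: col)
  also have "\<dots> = - 2 * s * A$i$j" using zd symA[OF sym, of j i] by (simp add: algebra_simps)
  also have "\<dots> = - 2 * \<bar>A$i$j\<bar>" unfolding s_def by (simp add: abs_sgn mult.commute) 
  finally show ?thesis using j by (intro exI[of _ v]) simp
qed



theorem proposition2:
  fixes A :: "real^'n^'n" and eps :: real
  assumes sym: "transpose A = A"
    and zero_diag: "\<forall>i. A$i$i = 0"
    and deg_pos: "\<forall>i. deg A i > 0"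
    and conn: "connected_signed A"
    and eps_pos: "eps > 0"
    and step: "eps * Max (range (deg A)) < 1"
    and cases: "structurally_balanced A \<or>
                (\<not> structurally_balanced A \<and> lam_min (normLap A) < 2 - lam_max (normLap A))"
  shows "pi1 A < pi1d eps A"
proof -
  define muM where "muM = lam_max (Bm A)"
  define mum where "mum = lam_min (Bm A)"
  define D where "D = Max (range (deg A))"
  have symB: "transpose (Bm A) = Bm A" by (rule Bm_sym[OF sym])
  note sM = spec_max[OF symB, folded muM_def]
  note sm = spec_min[OF symB, folded mum_def]
  have EN: "real_eigenvalues (normLap A) = (\<lambda>x. 1 - x) ` real_eigenvalues (Bm A)"
  proof (rule set_eqI)
    fix l
    show "l \<in> real_eigenvalues (normLap A) \<longleftrightarrow> l \<in> (\<lambda>x. 1 - x) ` real_eigenvalues (Bm A)"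
    proof
      assume "l \<in> real_eigenvalues (normLap A)"
      then have "1 - l \<in> real_eigenvalues (Bm A)" using normLap_eig[OF deg_pos] by blast
      then show "l \<in> (\<lambda>x. 1 - x) ` real_eigenvalues (Bm A)" using image_eqI[of l "\<lambda>x. 1 - x" "1 - l"] by simp
    next
      assume "l \<in> (\<lambda>x. 1 - x) ` real_eigenvalues (Bm A)"
      then obtain x where "x \<in> real_eigenvalues (Bm A)" "l = 1 - x" by blast
      then show "l \<in> real_eigenvalues (normLap A)" using normLap_eig[OF deg_pos, of l] by simp
    qed
  qed
  have finN: "finite (real_eigenvalues (normLap A))" unfolding EN using sM by blast
  have lminN: "lam_min (normLap A) = 1 - muM"
    unfolding lam_min_def
  proof (rule Min_eqI[OF finN])
    show "1 - muM \<in> real_eigenvalues (normLap A)" unfolding EN using sM by auto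
    fix y assume "y \<in> real_eigenvalues (normLap A)"
    then obtain x where "x \<in> real_eigenvalues (Bm A)" "y = 1 - x" unfolding EN by blast
    then show "1 - muM \<le> y" using sM by auto
  qed
  have lmaxN: "lam_max (normLap A) = 1 - mum"
    unfolding lam_max_def
  proof (rule Max_eqI[OF finN])
    show "1 - mum \<in> real_eigenvalues (normLap A)" unfolding EN using sm by auto
    fix y assume "y \<in> real_eigenvalues (normLap A)"
    then obtain x where "x \<in> real_eigenvalues (Bm A)" "y = 1 - x" unfolding EN by blast
    then show "y \<le> 1 - mum" using sm by auto
  qed
  have F1: "Q A v \<le> muM * Q (Delta A) v" for v
    using sM QB[OF deg_pos, of v] by metis
  have F2: "mum * Q (Delta A) v \<le> Q A v" for v
    using sm QB[OF deg_pos, of v] by metis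
  have F3: "\<exists>v. v \<noteq> 0 \<and> Q A v = mum * Q (Delta A) v"
  proof -
    obtain w where w: "w \<noteq> 0" "Q (Bm A) w = mum * (w \<bullet> w)" using sm by blast
    define v where "v = (\<chi> j. w$j / sqrt (deg A j))"
    have wv: "sc A v = w" unfolding v_def by (rule sc_inv[OF deg_pos])
    have "v \<noteq> 0" using w wv sc_zero[OF deg_pos] by blast
    moreover have "Q A v = mum * Q (Delta A) v" using w(2) QB[OF deg_pos, of v] wv by simp
    ultimately show ?thesis by blast
  qed
  obtain v0 where v0: "Q A v0 < 0" using neg_vec[OF sym zero_diag deg_pos] by blast
  have v0nz: "v0 \<noteq> 0" using v0 by (auto simp: Q_def)
  have QDv0: "Q (Delta A) v0 > 0" by (rule QD_pos[OF deg_pos v0nz])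
  have mum_neg: "mum < 0"
  proof -
    have "mum * Q (Delta A) v0 < 0" using F2[of v0] v0 by linarith
    then show ?thesis using QDv0 by (simp add: mult_less_0_iff)
  qed
  have mum_ge: "- mum \<le> 1"
  proof -
    obtain v where v: "v \<noteq> 0" "Q A v = mum * Q (Delta A) v" using F3 by blast
    have "\<bar>Q A v\<bar> \<le> Q (Delta A) v" by (rule QA_bound[OF sym])
    then have "- mum * Q (Delta A) v \<le> 1 * Q (Delta A) v" using v(2) by simp
    then show ?thesis using QD_pos[OF deg_pos v(1)] by (simp only: mult_le_cancel_right)
  qed
  have key: "- mum \<le> muM \<and> muM > 0"
    using cases
  proof
    assume "structurally_balanced A"
    then obtain v where v: "v \<noteq> 0" "Q A v = Q (Delta A) v" using balanced_vec by blast
    have "1 * Q (Delta A) v \<le> muM * Q (Delta A) v" using F1[of v] v by simp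
    then have "1 \<le> muM" using QD_pos[OF deg_pos v(1)] by (simp only: mult_le_cancel_right)
    then show ?thesis using mum_ge by linarith
  next
    assume "\<not> structurally_balanced A \<and> lam_min (normLap A) < 2 - lam_max (normLap A)"
    then have "1 - muM < 2 - (1 - mum)" using lminN lmaxN by simp
    then show ?thesis using mum_neg by linarith
  qed
  have pi1: "pi1 A = 1 / muM" unfolding pi1_def lminN by simp
  define c where "c = 2 / eps"
  define g where "g p = lam_max (Lpi A p)" for p
  have gb: "Q (Delta A) u - p * Q A u \<le> g p * (u \<bullet> u)" for p u
    using spec_max[OF Lpi_sym[OF sym, of p]] QL[of A p u] unfolding g_def by metis
  have ga: "\<exists>v. v \<noteq> 0 \<and> Q (Delta A) v - p * Q A v = g p * (v \<bullet> v)" for p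
    using spec_max[OF Lpi_sym[OF sym, of p]] QL[of A p] unfolding g_def by metis
  have QDup: "eps * Q (Delta A) v < v \<bullet> v" if "v \<noteq> 0" for v
    by (rule QD_upper[OF deg_pos eps_pos step that])
  have g0: "g 0 < c"
  proof -
    obtain v where v: "v \<noteq> 0" "Q (Delta A) v - 0 * Q A v = g 0 * (v \<bullet> v)" using ga by blast
    have vv: "v \<bullet> v > 0" using v by simp
    have "eps * (g 0 * (v \<bullet> v)) < v \<bullet> v" using QDup[OF v(1)] v(2) by simp
    then have "eps * g 0 < 1" using vv by (simp add: mult.assoc[symmetric])
    then have "g 0 < 1 / eps" using eps_pos by (simp add: field_simps)
    also have "1 / eps < c" unfolding c_def using eps_pos by (simp add: divide_strict_right_mono)
    finally show ?thesis .
  qed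
  have gpi: "g (pi1 A) < c"
  proof -
    define p where "p = pi1 A"
    have pp: "p > 0" unfolding p_def pi1 using key by simp
    obtain v where v: "v \<noteq> 0" "Q (Delta A) v - p * Q A v = g p * (v \<bullet> v)" using ga by blast
    have vv: "v \<bullet> v > 0" using v by simp
    have QDn: "Q (Delta A) v \<ge> 0" using QD_pos[OF deg_pos v(1)] by simp
    have "- p * Q A v \<le> Q (Delta A) v"
    proof (cases "Q A v \<ge> 0")
      case True
      have "p * Q A v \<ge> 0" using pp True by simp
      then show ?thesis using QDn by linarith
    next
      case False
      have "- Q A v \<le> - mum * Q (Delta A) v" using F2[of v] by simp
      also have "\<dots> \<le> muM * Q (Delta A) v" using key QDn mult_right_mono[of "- mum" muM "Q (Delta A) v"] by blast
      finally have "- Q A v \<le> muM * Q (Delta A) v" .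
      then have "p * (- Q A v) \<le> p * (muM * Q (Delta A) v)" using pp mult_left_mono[of "- Q A v" "muM * Q (Delta A) v" p] by linarith
      also have "p * (muM * Q (Delta A) v) = Q (Delta A) v" unfolding p_def pi1 using key by simp
      finally show ?thesis by simp
    qed
    then have "g p * (v \<bullet> v) \<le> 2 * Q (Delta A) v" using v(2) by linarith
    then have "eps * (g p * (v \<bullet> v)) \<le> eps * (2 * Q (Delta A) v)" using eps_pos
      by (intro mult_left_mono) auto
    also have "\<dots> = 2 * (eps * Q (Delta A) v)" by simp
    also have "\<dots> < 2 * (v \<bullet> v)" using QDup[OF v(1)] by simp
    finally have "(eps * g p) * (v \<bullet> v) < 2 * (v \<bullet> v)" by (simp add: mult.assoc)
    then have "eps * g p < 2" using vv by simp
    then show ?thesis unfolding c_def p_def[symmetric] using eps_pos by (simp add: field_simps)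
  qed
  have conv: "g (t * p + (1 - t) * q) \<le> t * g p + (1 - t) * g q" if "0 \<le> t" "t \<le> 1" for t p q
  proof -
    define r where "r = t * p + (1 - t) * q"
    obtain v where v: "v \<noteq> 0" "Q (Delta A) v - r * Q A v = g r * (v \<bullet> v)" using ga by blast
    have vv: "v \<bullet> v > 0" using v by simp
    have "g r * (v \<bullet> v) = t * (Q (Delta A) v - p * Q A v) + (1 - t) * (Q (Delta A) v - q * Q A v)"
      using v(2) unfolding r_def by (simp add: algebra_simps)
    also have "\<dots> \<le> t * (g p * (v \<bullet> v)) + (1 - t) * (g q * (v \<bullet> v))"
      using that gb[of v p] gb[of v q] by (intro add_mono mult_left_mono) auto
    finally have "g r * (v \<bullet> v) \<le> (t * g p + (1 - t) * g q) * (v \<bullet> v)" by (simp add: algebra_simps)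
    then show ?thesis unfolding r_def using vv by simp
  qed
  have below: "g p < c" if "0 < p" "p < q" "g q \<le> c" for p q
  proof -
    define t where "t = p / q"
    have t: "0 < t" "t < 1" using that unfolding t_def by auto
    have "p = t * q + (1 - t) * 0" unfolding t_def using that by simp
    then have "g p \<le> t * g q + (1 - t) * g 0" using conv[of t q 0] t by simp
    also have "\<dots> < t * c + (1 - t) * c"
      using t g0 that(3) by (intro add_le_less_mono mult_left_mono mult_strict_left_mono) auto
    finally show ?thesis by (simp add: algebra_simps)
  qed
  have lip: "g p \<le> g q + D * \<bar>p - q\<bar>" for p q
  proof -
    obtain v where v: "v \<noteq> 0" "Q (Delta A) v - p * Q A v = g p * (v \<bullet> v)" using ga by blast
    have vv: "v \<bullet> v > 0" using v by simp
    have b: "\<bar>Q A v\<bar> \<le> D * (v \<bullet> v)" using QA_bound[OF sym, of v] QD_le[OF deg_pos, of v] unfolding D_def by linarith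
    have "g p * (v \<bullet> v) = (Q (Delta A) v - q * Q A v) - (p - q) * Q A v" using v(2) by (simp add: algebra_simps)
    also have "\<dots> \<le> g q * (v \<bullet> v) + \<bar>p - q\<bar> * \<bar>Q A v\<bar>"
      using gb[of v q] abs_ge_minus_self[of "(p - q) * Q A v"] by (simp add: abs_mult)
    also have "\<dots> \<le> g q * (v \<bullet> v) + \<bar>p - q\<bar> * (D * (v \<bullet> v))"
      using b by (simp add: mult_left_mono)
    finally have "g p * (v \<bullet> v) \<le> (g q + D * \<bar>p - q\<bar>) * (v \<bullet> v)" by (simp add: algebra_simps)
    then show ?thesis using vv by simp
  qed
  have D0: "D \<ge> 0" using deg_pos unfolding D_def by (meson Max_ge finite UNIV_I image_eqI less_imp_le order_trans finite_imageI)
  have cont: "continuous_on S g" for S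
  proof (rule lipschitz_on_continuous_on)
    show "D-lipschitz_on S g" unfolding lipschitz_on_def dist_real_def
      using D0 lip by (auto simp: abs_le_iff abs_minus_commute) (smt (verit) abs_minus_commute)+
  qed
  obtain P where P: "P > 0" "g P \<ge> c"
  proof -
    define P where "P = c * (v0 \<bullet> v0) / (- Q A v0) + 1"
    have cpos: "c > 0" unfolding c_def using eps_pos by simp
    have vv: "v0 \<bullet> v0 > 0" using v0nz by simp
    have "c * (v0 \<bullet> v0) / (- Q A v0) > 0" using cpos vv v0 by (intro divide_pos_pos mult_pos_pos) auto
    then have Ppos: "P > 0" unfolding P_def by linarith
    have "- P * Q A v0 = c * (v0 \<bullet> v0) - Q A v0" unfolding P_def using v0 by (simp add: field_simps)
    then have "c * (v0 \<bullet> v0) \<le> Q (Delta A) v0 - P * Q A v0" using v0 QDv0 by simp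
    also have "\<dots> \<le> g P * (v0 \<bullet> v0)" by (rule gb)
    finally have "c \<le> g P" using vv by simp
    then show ?thesis using that Ppos by blast
  qed
  obtain b where b: "0 \<le> b" "b \<le> P" "g b = c"
    using IVT'[of g 0 c P] g0 P cont by auto
  have bpos: "b > 0" using b g0 by (cases "b = 0") auto
  have uniq: "y = b" if "0 < y" "g y = c" for y
  proof (rule ccontr)
    assume "y \<noteq> b"
    then consider "y < b" | "b < y" by linarith
    then show False
    proof cases
      case 1 then show False using below[of y b] that b by simp
    next
      case 2 then show False using below[of b y] that b bpos by simp
    qed
  qed
  have pd: "pi1d eps A = b"
    unfolding pi1d_def
  proof (rule Least_equality)
    show "0 < b \<and> lam_max (Lpi A b) = 2 / eps" using bpos b(3) unfolding g_def c_def by simp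
    fix y assume "0 < y \<and> lam_max (Lpi A y) = 2 / eps"
    then have "y = b" using uniq unfolding g_def c_def by blast
    then show "b \<le> y" by simp
  qed
  have pipos: "pi1 A > 0" unfolding pi1 using key by simp
  show ?thesis
  proof (rule ccontr)
    assume "\<not> pi1 A < pi1d eps A"
    then have "b \<le> pi1 A" using pd by simp
    moreover have "b \<noteq> pi1 A" using gpi b(3) by auto
    ultimately have "b < pi1 A" by simp
    then have "g b < c" using below[of b "pi1 A"] bpos gpi by simp
    then show False using b(3) by simp
  qed
qed

end
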